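(* Let $q\ge2$, $r\ge1$, $\rho\ge 2$ be integers, $N=r+\rho-1$, and let $\mathcal{C}$ be a $q$-ary $(n,k,r,\rho)$ LRC code with minimum distance $d$. Let $\mu=\lceil (n-(d-1))/N\rceil+1$. Then: (1) (locality-dependent Hamming bound) $$k\le \mu\Big(N-\log_q\Big(\sum_{e=0}^{\lfloor(\rho-1)/2\rfloor}\binom Ne (q-1)^e\Big)\Big);$$ (2) (locality-dependent Plotkin bound) if $\rho>\frac{q-1}{q}N$, then $$k\le \mu\log_q\frac{\rho}{\rho-\frac{q-1}{q}N};$$ (3) (locality-dependent Singleton bound) $$k\le \mu r.$$
   Context: A $q$-ary code of length $n$ is a subset $\mathcal{C}\subseteq Q^n$, $|Q|=q$; its minimum distance is the minimum Hamming distance between distinct codewords and its dimension is $k=\log_q|\mathcal{C}|$. For $I\subseteq[n]$, $\mathcal{C}_I$ is the projection of $\mathcal{C}$ onto the coordinates in $I$. $\mathcal{C}$ (of cardinality $q^k$) is an $(n,k,r,\rho)$ LRC code if every coordinate $i\in[n]$ lies in a subset $\mathcal{R}_i\subseteq[n]$ of size at most $r+\rho-1$ such that $\mathcal{C}_{\mathcal{R}_i}$ has minimum distance at least $\rho$. *)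

theory Defs
  imports "HOL-Library.FuncSet" Complex_Main
begin

text \<open>Words of length n over alphabet Q are extensional functions from {1..n} to Q.
  Hamming distance restricted to an index set I.\<close>
definition hdist :: "nat set \<Rightarrow> (nat \<Rightarrow> 'a) \<Rightarrow> (nat \<Rightarrow> 'a) \<Rightarrow> nat" where
  "hdist I x y = card {i \<in> I. x i \<noteq> y i}"

definition proj :: "(nat \<Rightarrow> 'a) set \<Rightarrow> nat set \<Rightarrow> (nat \<Rightarrow> 'a) set" where
  "proj C I = (\<lambda>c. restrict c I) ` C"

definition min_dist_ge :: "nat set \<Rightarrow> (nat \<Rightarrow> 'a) set \<Rightarrow> nat \<Rightarrow> bool" where
  "min_dist_ge I C \<rho> \<longleftrightarrow> (\<forall>x\<in>C. \<forall>y\<in>C. x \<noteq> y \<longrightarrow> hdist I x y \<ge> \<rho>)"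

definition has_min_dist :: "nat set \<Rightarrow> (nat \<Rightarrow> 'a) set \<Rightarrow> nat \<Rightarrow> bool" where
  "has_min_dist I C d \<longleftrightarrow> min_dist_ge I C d \<and>
     (\<exists>x\<in>C. \<exists>y\<in>C. x \<noteq> y \<and> hdist I x y = d)"

definition is_code :: "'a set \<Rightarrow> nat \<Rightarrow> (nat \<Rightarrow> 'a) set \<Rightarrow> bool" where
  "is_code Q n C \<longleftrightarrow> C \<subseteq> (PiE {1..n} (\<lambda>_. Q))"

definition is_LRC :: "'a set \<Rightarrow> nat \<Rightarrow> real \<Rightarrow> nat \<Rightarrow> nat \<Rightarrow> (nat \<Rightarrow> 'a) set \<Rightarrow> bool" where
  "is_LRC Q n k r \<rho> C \<longleftrightarrow> is_code Q n C \<and> real (card C) = real (card Q) powr k \<and>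
     (\<forall>i\<in>{1..n}. \<exists>R. i \<in> R \<and> R \<subseteq> {1..n} \<and> card R \<le> r + \<rho> - 1 \<and>
        min_dist_ge R (proj C R) \<rho>)"

end

theory Submission
  imports Defs
begin

lemma binom_step: "Suc k * (a choose Suc k) = (a - k) * (a choose k)"
  by (metis binomial_absorb_comp binomial_absorption)

lemma binom_lc:
  assumes "e \<le> t"
  shows "(a choose e) * (a choose Suc t) \<le> (a choose Suc e) * (a choose t)"
proof -
  have h: "(a - t) * Suc e \<le> (a - e) * Suc t"
  proof (cases "t \<le> a")
    case True
    have "(a - t) * Suc e \<le> (a - t) * Suc t" using assms by simp
    also have "\<dots> \<le> (a - e) * Suc t" using assms True by (intro mult_right_mono) auto
    finally show ?thesis .
  next
    case False then show ?thesis by simp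
  qed
  have "((a choose e) * (a choose Suc t)) * (Suc e * Suc t) = (a choose e) * Suc e * (Suc t * (a choose Suc t))"
    by (simp only: mult_ac)
  also have "\<dots> = (a choose e) * Suc e * ((a - t) * (a choose t))" by (simp only: binom_step)
  also have "\<dots> = (a choose e) * (a choose t) * ((a - t) * Suc e)" by (simp only: mult_ac)
  also have "\<dots> \<le> (a choose e) * (a choose t) * ((a - e) * Suc t)"
    using h by (intro mult_left_mono) auto
  also have "\<dots> = (a choose t) * Suc t * ((a - e) * (a choose e))" by (simp only: mult_ac)
  also have "\<dots> = (a choose t) * Suc t * (Suc e * (a choose Suc e))" by (simp only: binom_step)
  also have "\<dots> = ((a choose Suc e) * (a choose t)) * (Suc e * Suc t)" by (simp only: mult_ac)
  finally show ?thesis by (metis mult_le_cancel2 zero_less_Suc mult_pos_pos)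
qed

definition vol :: "real \<Rightarrow> nat \<Rightarrow> nat \<Rightarrow> real" where
  "vol p t a = (\<Sum>e<t. real (a choose e) * p ^ e)"

lemma vol_rec: "vol p (Suc t) (Suc a) = vol p (Suc t) a + p * vol p t a"
proof (induction t)
  case 0 then show ?case by (simp add: vol_def)
next
  case (Suc t)
  have "vol p (Suc (Suc t)) (Suc a) = vol p (Suc t) (Suc a) + real (Suc a choose Suc t) * p ^ Suc t"
    by (simp add: vol_def)
  also have "\<dots> = vol p (Suc t) a + p * vol p t a + (real (a choose t) + real (a choose Suc t)) * p ^ Suc t"
    using Suc by simp
  also have "\<dots> = vol p (Suc (Suc t)) a + p * vol p (Suc t) a"
    by (simp add: vol_def algebra_simps)
  finally show ?case .
qed

lemma vol_ge1: "p \<ge> 0 \<Longrightarrow> vol p (Suc t) a \<ge> 1"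
proof -
  assume p: "p \<ge> 0"
  have "vol p (Suc t) a = vol p t a + real (a choose t) * p ^ t" by (simp add: vol_def)
  have "vol p (Suc t) a = 1 + (\<Sum>e\<in>{1..<Suc t}. real (a choose e) * p ^ e)"
    unfolding vol_def lessThan_atLeast0 by (simp add: sum.atLeast_Suc_lessThan)
  also have "\<dots> \<ge> 1" using p by (intro add_increasing2 sum_nonneg) auto
  finally show ?thesis by simp
qed

lemma vol_lc_t:
  assumes p: "p \<ge> 0"
  shows "vol p t a * vol p (Suc (Suc t)) a \<le> (vol p (Suc t) a)^2"
proof -
  define b where "b e = real (a choose e) * p ^ e" for e
  have V: "vol p s a = (\<Sum>e<s. b e)" for s by (simp add: vol_def b_def)
  have key: "b e * b (Suc t) \<le> b (Suc e) * b t" if "e \<le> t" for e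
  proof -
    have "real ((a choose e) * (a choose Suc t)) \<le> real ((a choose Suc e) * (a choose t))"
      using binom_lc[OF that, of a] by (simp only: of_nat_le_iff)
    hence "real (a choose e) * real (a choose Suc t) * p ^ (e + Suc t) \<le> real (a choose Suc e) * real (a choose t) * p ^ (e + Suc t)"
      using p by (intro mult_right_mono) auto
    moreover have "b e * b (Suc t) = real (a choose e) * real (a choose Suc t) * p ^ (e + Suc t)"
      by (simp only: b_def power_add mult_ac)
    moreover have "b (Suc e) * b t = real (a choose Suc e) * real (a choose t) * p ^ (Suc e + t)"
      by (simp only: b_def power_add mult_ac)
    moreover have "Suc e + t = e + Suc t" by simp
    ultimately show ?thesis by simp
  qed
  have "(vol p (Suc t) a)^2 - vol p t a * vol p (Suc (Suc t)) a
        = vol p (Suc t) a * b t - vol p t a * b (Suc t)"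
    by (simp add: V power2_eq_square algebra_simps)
  also have "vol p (Suc t) a * b t = b 0 * b t + (\<Sum>e<t. b (Suc e) * b t)"
    unfolding V by (subst sum.lessThan_Suc_shift) (simp add: sum_distrib_right distrib_right)
  also have "vol p t a * b (Suc t) = (\<Sum>e<t. b e * b (Suc t))"
    unfolding V by (simp add: sum_distrib_right)
  finally have eq: "(vol p (Suc t) a)^2 - vol p t a * vol p (Suc (Suc t)) a
      = b 0 * b t + (\<Sum>e<t. b (Suc e) * b t - b e * b (Suc t))"
    by (simp add: sum_subtractf)
  have "0 \<le> b 0 * b t" using p by (simp add: b_def)
  moreover have "0 \<le> (\<Sum>e<t. b (Suc e) * b t - b e * b (Suc t))"
    using key by (intro sum_nonneg) auto
  ultimately show ?thesis using eq by linarith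
qed

lemma vol_lc_a:
  assumes p: "p \<ge> 0"
  shows "vol p (Suc (Suc s)) a * vol p (Suc (Suc s)) (Suc (Suc a)) \<le> (vol p (Suc (Suc s)) (Suc a))^2"
proof -
  define A where "A = vol p (Suc (Suc s)) a"
  define B where "B = vol p (Suc s) a"
  define C where "C = vol p s a"
  have 1: "vol p (Suc (Suc s)) (Suc a) = A + p * B" by (simp add: vol_rec A_def B_def)
  have 2: "vol p (Suc (Suc s)) (Suc (Suc a)) = A + p * B + p * (B + p * C)"
    by (simp add: vol_rec A_def B_def C_def)
  have "C * A \<le> B^2" using vol_lc_t[OF p, of s a] by (simp add: A_def B_def C_def)
  hence "p^2 * (C * A) \<le> p^2 * B^2" by (intro mult_left_mono) auto
  thus ?thesis unfolding 1 2 A_def[symmetric] by (simp add: power2_eq_square algebra_simps)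
qed

lemma logconc_rate:
  fixes f :: "nat \<Rightarrow> real"
  assumes f0: "f 0 = 1" and fpos: "\<And>a. f a > 0"
    and lc: "\<And>a. f a * f (Suc (Suc a)) \<le> (f (Suc a))^2"
    and aN: "a \<le> N"
  shows "f N ^ a \<le> f a ^ N"
proof -
  define L where "L j = ln (f j)" for j
  define D where "D j = L (Suc j) - L j" for j
  have Ddec: "D (Suc j) \<le> D j" for j
  proof -
    have "ln (f j * f (Suc (Suc j))) \<le> ln ((f (Suc j))^2)"
    proof (subst ln_le_cancel_iff)
      show "0 < f j * f (Suc (Suc j))" using fpos by (simp add: mult_pos_pos)
      show "0 < (f (Suc j))^2" using fpos[of "Suc j"] by simp
    qed (rule lc)
    moreover have "f j > 0" "f (Suc j) > 0" "f (Suc (Suc j)) > 0" using fpos by auto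
    ultimately show ?thesis unfolding D_def L_def by (simp add: ln_mult power2_eq_square)
  qed
  have Dmono: "j \<le> k \<Longrightarrow> D k \<le> D j" for j k
    using Ddec by (metis decseqD decseq_SucI)
  have Lsum: "L j = (\<Sum>i<j. D i)" for j
    by (induction j) (simp_all add: L_def D_def f0)
  have main: "real a * L (a + m) \<le> real (a + m) * L a" for m
  proof (induction m)
    case 0 then show ?case by simp
  next
    case (Suc m)
    have "real a * D (a + m) \<le> L a"
    proof -
      have "(\<Sum>i<a. D (a + m)) \<le> (\<Sum>i<a. D i)" by (intro sum_mono Dmono) auto
      thus ?thesis by (simp add: Lsum)
    qed
    have "L (a + Suc m) = L (a + m) + D (a + m)" by (simp add: D_def)
    hence "real a * L (a + Suc m) = real a * L (a + m) + real a * D (a + m)" by (simp add: algebra_simps)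
    also have "\<dots> \<le> real (a + m) * L a + L a" using Suc \<open>real a * D (a + m) \<le> L a\<close> by linarith
    finally show ?case by (simp add: algebra_simps)
  qed
  obtain m where m: "N = a + m" using aN le_Suc_ex by blast
  have "ln (f N ^ a) \<le> ln (f a ^ N)"
    using main[of m] fpos unfolding m L_def by (simp add: ln_realpow)
  thus ?thesis using fpos by (simp add: ln_le_cancel_iff)
qed

lemma hdist_tri:
  assumes "finite I"
  shows "hdist I x z \<le> hdist I x y + hdist I y z"
proof -
  have "{i\<in>I. x i \<noteq> z i} \<subseteq> {i\<in>I. x i \<noteq> y i} \<union> {i\<in>I. y i \<noteq> z i}" by auto
  hence "card {i\<in>I. x i \<noteq> z i} \<le> card ({i\<in>I. x i \<noteq> y i} \<union> {i\<in>I. y i \<noteq> z i})"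
    using assms by (intro card_mono) auto
  also have "\<dots> \<le> card {i\<in>I. x i \<noteq> y i} + card {i\<in>I. y i \<noteq> z i}" by (rule card_Un_le)
  finally show ?thesis unfolding hdist_def .
qed

lemma hdist_sym: "hdist I x y = hdist I y x"
  unfolding hdist_def by (metis (mono_tags, lifting) Collect_cong)

lemma sphere_card:
  fixes D :: "nat set" and Q :: "'a set" and x :: "nat \<Rightarrow> 'a"
  assumes D: "finite D" and Qf: "finite Q" and x: "x \<in> PiE D (\<lambda>_. Q)" and E: "E \<subseteq> D"
  shows "card {w \<in> PiE D (\<lambda>_. Q). {i\<in>D. w i \<noteq> x i} = E} = (card Q - 1) ^ card E"
proof -
  define ext where "ext g = (\<lambda>i. if i \<in> E then g i else x i)" for g :: "nat \<Rightarrow> 'a"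
  have xi: "i \<notin> D \<Longrightarrow> x i = undefined" "i \<in> D \<Longrightarrow> x i \<in> Q" for i using x by (auto simp: PiE_iff extensional_def)
  have eq: "{w \<in> PiE D (\<lambda>_. Q). {i\<in>D. w i \<noteq> x i} = E} = ext ` PiE E (\<lambda>i. Q - {x i})"
  proof (intro equalityI subsetI)
    fix w assume w: "w \<in> {w \<in> PiE D (\<lambda>_. Q). {i\<in>D. w i \<noteq> x i} = E}"
    have "w = ext (restrict w E)"
    proof
      fix i show "w i = ext (restrict w E) i"
        using w xi[of i] E by (cases "i \<in> D") (auto simp: ext_def PiE_iff extensional_def)
    qed
    moreover have "restrict w E \<in> PiE E (\<lambda>i. Q - {x i})" using w E by (auto simp: PiE_iff)
    ultimately show "w \<in> ext ` PiE E (\<lambda>i. Q - {x i})" by blast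
  next
    fix w assume "w \<in> ext ` PiE E (\<lambda>i. Q - {x i})"
    then obtain g where g: "g \<in> PiE E (\<lambda>i. Q - {x i})" and w: "w = ext g" by auto
    have "w \<in> PiE D (\<lambda>_. Q)"
      using g E xi unfolding w ext_def by (auto simp: PiE_iff extensional_def)
    moreover have "{i\<in>D. w i \<noteq> x i} = E"
      using g E unfolding w ext_def by (auto simp: PiE_iff)
    ultimately show "w \<in> {w \<in> PiE D (\<lambda>_. Q). {i\<in>D. w i \<noteq> x i} = E}" by blast
  qed
  have inj: "inj_on ext (PiE E (\<lambda>i. Q - {x i}))"
  proof (rule inj_onI)
    fix g h assume g: "g \<in> PiE E (\<lambda>i. Q - {x i})" and h: "h \<in> PiE E (\<lambda>i. Q - {x i})" and "ext g = ext h"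
    hence "\<forall>i\<in>E. g i = h i" unfolding ext_def by (metis)
    thus "g = h" using g h by (metis PiE_ext)
  qed
  have fE: "finite E" using E D finite_subset by blast
  have "card {w \<in> PiE D (\<lambda>_. Q). {i\<in>D. w i \<noteq> x i} = E} = card (PiE E (\<lambda>i. Q - {x i}))"
    unfolding eq using inj by (rule card_image)
  also have "\<dots> = (\<Prod>i\<in>E. card (Q - {x i}))" using fE by (rule card_PiE)
  also have "\<dots> = (\<Prod>i\<in>E. card Q - 1)"
    using xi E Qf by (intro prod.cong) (auto simp: card_Diff_singleton)
  also have "\<dots> = (card Q - 1) ^ card E" by simp
  finally show ?thesis .
qed

lemma ball_card:
  fixes D :: "nat set" and Q :: "'a set" and x :: "nat \<Rightarrow> 'a"
  assumes D: "finite D" and Qf: "finite Q" and x: "x \<in> PiE D (\<lambda>_. Q)" and Q1: "card Q \<ge> 1"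
  shows "vol (real (card Q) - 1) (Suc t) (card D) \<le> real (card {w \<in> PiE D (\<lambda>_. Q). hdist D w x \<le> t})"
proof -
  define S where "S E = {w \<in> PiE D (\<lambda>_. Q). {i\<in>D. w i \<noteq> x i} = E}" for E
  define P where "P e = {E. E \<subseteq> D \<and> card E = e}" for e
  have finP: "finite (P e)" for e unfolding P_def using D by (auto intro: finite_subset[of _ "Pow D"])
  have finPi: "finite (PiE D (\<lambda>_. Q))" using D Qf by (simp add: finite_PiE)
  have finS: "finite (S E)" for E unfolding S_def using finPi by auto
  have sub: "(\<Union>E\<in>(\<Union>e\<le>t. P e). S E) \<subseteq> {w \<in> PiE D (\<lambda>_. Q). hdist D w x \<le> t}"
    unfolding S_def P_def hdist_def by auto
  have fin_ball: "finite {w \<in> PiE D (\<lambda>_. Q). hdist D w x \<le> t}" using finPi by auto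
  have disjS: "\<forall>A\<in>(\<Union>e\<le>t. P e). \<forall>B\<in>(\<Union>e\<le>t. P e). A \<noteq> B \<longrightarrow> S A \<inter> S B = {}"
    unfolding S_def by auto
  have "card (\<Union>E\<in>(\<Union>e\<le>t. P e). S E) = (\<Sum>E\<in>(\<Union>e\<le>t. P e). card (S E))"
    using finP finS disjS by (intro card_UN_disjoint) auto
  also have "\<dots> = (\<Sum>e\<le>t. \<Sum>E\<in>P e. card (S E))"
    using finP by (intro sum.UNION_disjoint) (auto simp: P_def)
  also have "\<dots> = (\<Sum>e\<le>t. \<Sum>E\<in>P e. (card Q - 1) ^ e)"
    unfolding S_def P_def using sphere_card[OF D Qf x] by (intro sum.cong refl) auto
  also have "\<dots> = (\<Sum>e\<le>t. (card D choose e) * (card Q - 1) ^ e)"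
    unfolding P_def using n_subsets[OF D] by simp
  finally have c: "card (\<Union>E\<in>(\<Union>e\<le>t. P e). S E) = (\<Sum>e\<le>t. (card D choose e) * (card Q - 1) ^ e)" .
  have "vol (real (card Q) - 1) (Suc t) (card D) = real (\<Sum>e\<le>t. (card D choose e) * (card Q - 1) ^ e)"
    unfolding vol_def lessThan_Suc_atMost using Q1 by (simp add: of_nat_diff)
  also have "\<dots> \<le> real (card {w \<in> PiE D (\<lambda>_. Q). hdist D w x \<le> t})"
  proof -
    have "(\<Sum>e\<le>t. (card D choose e) * (card Q - 1) ^ e) \<le> card {w \<in> PiE D (\<lambda>_. Q). hdist D w x \<le> t}"
      using card_mono[OF fin_ball sub] c by simp
    thus ?thesis by (simp only: of_nat_le_iff)
  qed
  finally show ?thesis .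
qed

lemma packing:
  fixes D :: "nat set" and Q :: "'a set" and F :: "(nat \<Rightarrow> 'a) set"
  assumes D: "finite D" and Qf: "finite Q" and Q1: "card Q \<ge> 1"
    and F: "F \<subseteq> PiE D (\<lambda>_. Q)" and md: "min_dist_ge D F \<rho>" and t: "2 * t + 1 \<le> \<rho>"
  shows "real (card F) * vol (real (card Q) - 1) (Suc t) (card D) \<le> real (card Q) ^ card D"
proof -
  define B where "B x = {w \<in> PiE D (\<lambda>_. Q). hdist D w x \<le> t}" for x
  have finPi: "finite (PiE D (\<lambda>_. Q))" using D Qf by (simp add: finite_PiE)
  have finF: "finite F" using F finPi finite_subset by blast
  have finB: "finite (B x)" for x using finPi unfolding B_def by auto
  have disj: "\<forall>x\<in>F. \<forall>y\<in>F. x \<noteq> y \<longrightarrow> B x \<inter> B y = {}"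
  proof (intro ballI impI)
    fix x y assume x: "x \<in> F" and y: "y \<in> F" and xy: "x \<noteq> y"
    show "B x \<inter> B y = {}"
    proof (rule ccontr)
      assume "B x \<inter> B y \<noteq> {}"
      then obtain w where "hdist D w x \<le> t" "hdist D w y \<le> t" unfolding B_def by auto
      hence "hdist D x y \<le> 2 * t" using hdist_tri[OF D, of x y w] hdist_sym[of D x w] by linarith
      moreover have "hdist D x y \<ge> \<rho>" using md x y xy unfolding min_dist_ge_def by auto
      ultimately show False using t by linarith
    qed
  qed
  have "real (card F) * vol (real (card Q) - 1) (Suc t) (card D) = (\<Sum>x\<in>F. vol (real (card Q) - 1) (Suc t) (card D))"
    by simp
  also have "\<dots> \<le> (\<Sum>x\<in>F. real (card (B x)))"
    unfolding B_def using ball_card[OF D Qf _ Q1] F by (intro sum_mono) auto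
  also have "\<dots> = real (card (\<Union>x\<in>F. B x))"
    using card_UN_disjoint[OF finF, of B] finB disj by simp
  also have "\<dots> \<le> real (card (PiE D (\<lambda>_. Q)))"
    using finPi unfolding B_def by (intro of_nat_mono card_mono) auto
  also have "\<dots> = real (card Q) ^ card D" using D by (simp add: card_PiE)
  finally show ?thesis .
qed

lemma singleton_fiber:
  fixes D :: "nat set" and Q :: "'a set" and F :: "(nat \<Rightarrow> 'a) set"
  assumes D: "finite D" and Qf: "finite Q"
    and F: "F \<subseteq> PiE D (\<lambda>_. Q)" and md: "min_dist_ge D F \<rho>" and r1: "\<rho> \<ge> 1"
  shows "card F \<le> card Q ^ (card D - (\<rho> - 1))"
proof -
  obtain D' where D': "D' \<subseteq> D" "card D' = card D - (\<rho> - 1)"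
    using obtain_subset_with_card_n[of "card D - (\<rho> - 1)" D] by auto
  have fD': "finite D'" using D' D finite_subset by blast
  have inj: "inj_on (\<lambda>x. restrict x D') F"
  proof (rule inj_onI, rule ccontr)
    fix x y assume x: "x \<in> F" and y: "y \<in> F" and eq: "restrict x D' = restrict y D'" and xy: "x \<noteq> y"
    have "{i\<in>D. x i \<noteq> y i} \<subseteq> D - D'"
      using eq by (auto simp: fun_eq_iff restrict_def split: if_splits)
    hence "card {i\<in>D. x i \<noteq> y i} \<le> card (D - D')" using D by (intro card_mono) auto
    also have "\<dots> = card D - card D'" using D' fD' by (simp add: card_Diff_subset)
    finally have "hdist D x y \<le> \<rho> - 1" unfolding hdist_def using D' by linarith
    moreover have "hdist D x y \<ge> \<rho>" using md x y xy unfolding min_dist_ge_def by auto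
    ultimately show False using r1 by linarith
  qed
  have "card F = card ((\<lambda>x. restrict x D') ` F)" using inj by (simp add: card_image)
  also have "\<dots> \<le> card (PiE D' (\<lambda>_. Q))"
    using F D' fD' Qf by (intro card_mono) (auto simp: finite_PiE PiE_iff dest!: subsetD[OF F])
  also have "\<dots> = card Q ^ card D'" using fD' by (simp add: card_PiE)
  finally show ?thesis using D' by simp
qed

lemma sum_group_val:
  fixes g :: "'a \<Rightarrow> real" and F :: "(nat \<Rightarrow> 'a) set"
  assumes Qf: "finite Q" and finF: "finite F" and inQ: "\<forall>x\<in>F. x i \<in> Q"
  shows "(\<Sum>x\<in>F. g (x i)) = (\<Sum>v\<in>Q. real (card {x\<in>F. x i = v}) * g v)"
proof -
  have "(\<Sum>x\<in>F. g (x i)) = (\<Sum>x\<in>F. \<Sum>v\<in>Q. if x i = v then g v else 0)"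
    using inQ Qf by (intro sum.cong refl) simp
  also have "\<dots> = (\<Sum>v\<in>Q. \<Sum>x\<in>F. if x i = v then g v else 0)" by (rule sum.swap)
  also have "\<dots> = (\<Sum>v\<in>Q. real (card {x\<in>F. x i = v}) * g v)"
    using finF by (intro sum.cong refl) (simp add: sum.If_cases Int_def)
  finally show ?thesis .
qed

lemma plotkin_fiber:
  fixes D :: "nat set" and Q :: "'a set" and F :: "(nat \<Rightarrow> 'a) set"
  assumes Dfin: "finite D" and Qf: "finite Q" and Q1: "card Q \<ge> 1"
    and F: "F \<subseteq> PiE D (\<lambda>_. Q)" and md: "min_dist_ge D F \<rho>"
    and big: "(real (card Q) - 1) / real (card Q) * real (card D) < real \<rho>"
  shows "real (card F) \<le> real \<rho> / (real \<rho> - (real (card Q) - 1) / real (card Q) * real (card D))"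
proof -
  define q where "q = real (card Q)"
  define M where "M = real (card F)"
  define a where "a = real (card D)"
  define \<theta> where "\<theta> = (q - 1) / q"
  have qpos: "q > 0" using Q1 unfolding q_def by simp
  have finPi: "finite (PiE D (\<lambda>_. Q))" using Dfin Qf by (simp add: finite_PiE)
  have finF: "finite F" using F finPi finite_subset by blast
  have inQ: "\<forall>x\<in>F. x i \<in> Q" if "i \<in> D" for i using F that by (auto simp: PiE_iff)
  define n where "n i v = real (card {y\<in>F. y i = v})" for i v
  have hd: "real (hdist D x y) = (\<Sum>i\<in>D. if x i \<noteq> y i then 1 else 0)" for x y
    unfolding hdist_def using Dfin by (simp add: sum.If_cases Int_def)
  have low: "M * (M - 1) * real \<rho> \<le> (\<Sum>x\<in>F. \<Sum>y\<in>F. real (hdist D x y))"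
  proof -
    have "(\<Sum>y\<in>F. real (hdist D x y)) \<ge> (M - 1) * real \<rho>" if x: "x \<in> F" for x
    proof -
      have "(\<Sum>y\<in>F. real (hdist D x y)) = real (hdist D x x) + (\<Sum>y\<in>F - {x}. real (hdist D x y))"
        using finF x by (simp add: sum.remove)
      also have "\<dots> \<ge> (\<Sum>y\<in>F - {x}. real \<rho>)"
        using md x unfolding min_dist_ge_def by (intro add_increasing sum_mono) auto
      also have "(\<Sum>y\<in>F - {x}. real \<rho>) = (M - 1) * real \<rho>"
      proof -
        have "card F \<ge> 1" using finF x by (metis One_nat_def Suc_leI card_gt_0_iff empty_iff)
        thus ?thesis using finF x unfolding M_def by (simp add: card_Diff_singleton of_nat_diff)
      qed
      finally show ?thesis .
    qed
    hence "(\<Sum>x\<in>F. (M - 1) * real \<rho>) \<le> (\<Sum>x\<in>F. \<Sum>y\<in>F. real (hdist D x y))" by (intro sum_mono) auto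
    thus ?thesis unfolding M_def by (simp add: mult.assoc)
  qed
  have per: "(\<Sum>x\<in>F. \<Sum>y\<in>F. (if x i \<noteq> y i then 1 else 0 :: real)) \<le> \<theta> * M^2" if i: "i \<in> D" for i
  proof -
    have s1: "(\<Sum>v\<in>Q. n i v) = M"
      using sum_group_val[OF Qf finF inQ[OF i], of "\<lambda>_. 1"] unfolding M_def n_def by simp
    have s2: "(\<Sum>x\<in>F. \<Sum>y\<in>F. (if x i \<noteq> y i then 1 else 0 :: real)) = M^2 - (\<Sum>v\<in>Q. n i v * n i v)"
    proof -
      have "(\<Sum>x\<in>F. \<Sum>y\<in>F. (if x i \<noteq> y i then 1 else 0 :: real)) = (\<Sum>x\<in>F. M - n i (x i))"
      proof (intro sum.cong refl)
        fix x assume "x \<in> F"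
        have "(\<Sum>y\<in>F. (if x i \<noteq> y i then 1 else 0 :: real)) = (\<Sum>y\<in>F. 1 - (if y i = x i then 1 else 0))"
          by (intro sum.cong refl) auto
        also have "\<dots> = M - n i (x i)"
          using finF unfolding M_def n_def by (simp add: sum_subtractf sum.If_cases Int_def)
        finally show "(\<Sum>y\<in>F. (if x i \<noteq> y i then 1 else 0 :: real)) = M - n i (x i)" .
      qed
      also have "\<dots> = M * M - (\<Sum>x\<in>F. n i (x i))" by (simp add: sum_subtractf M_def)
      also have "(\<Sum>x\<in>F. n i (x i)) = (\<Sum>v\<in>Q. n i v * n i v)"
        using sum_group_val[OF Qf finF inQ[OF i], of "n i"] unfolding n_def by simp
      finally show ?thesis by (simp add: power2_eq_square)
    qed
    have "0 \<le> (\<Sum>v\<in>Q. (n i v - M / q)^2)" by (intro sum_nonneg) auto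
    also have "\<dots> = (\<Sum>v\<in>Q. n i v * n i v) - 2 * (M / q) * (\<Sum>v\<in>Q. n i v) + q * (M / q)^2"
      unfolding q_def by (simp add: power2_eq_square algebra_simps sum.distrib sum_subtractf sum_distrib_left sum_divide_distrib)
    also have "\<dots> = (\<Sum>v\<in>Q. n i v * n i v) - M^2 / q"
      using qpos s1 by (simp add: power2_eq_square field_simps)
    finally have cs: "M^2 / q \<le> (\<Sum>v\<in>Q. n i v * n i v)" by simp
    have "\<theta> * M^2 = M^2 - M^2 / q" unfolding \<theta>_def using qpos by (simp add: field_simps)
    thus ?thesis using s2 cs by linarith
  qed
  have "(\<Sum>x\<in>F. \<Sum>y\<in>F. real (hdist D x y)) = (\<Sum>i\<in>D. \<Sum>x\<in>F. \<Sum>y\<in>F. (if x i \<noteq> y i then 1 else 0 :: real))"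
    unfolding hd by (simp add: sum.swap[of _ D] sum.swap[of _ D F])
  also have "\<dots> \<le> (\<Sum>i\<in>D. \<theta> * M^2)" using per by (intro sum_mono) auto
  also have "\<dots> = a * \<theta> * M^2" unfolding a_def by simp
  finally have up: "(\<Sum>x\<in>F. \<Sum>y\<in>F. real (hdist D x y)) \<le> a * \<theta> * M^2" .
  have big': "\<theta> * a < real \<rho>" using big unfolding \<theta>_def q_def a_def by simp
  have "M \<le> real \<rho> / (real \<rho> - \<theta> * a)"
  proof (cases "M = 0")
    case True thus ?thesis using big' by simp
  next
    case False
    hence Mpos: "M > 0" unfolding M_def by simp
    have "M * ((M - 1) * real \<rho>) \<le> M * (a * \<theta> * M)" using low up by (simp add: power2_eq_square mult_ac)
    hence "(M - 1) * real \<rho> \<le> a * \<theta> * M" using Mpos by simp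
    hence "M * (real \<rho> - \<theta> * a) \<le> real \<rho>" by (simp add: algebra_simps)
    thus ?thesis using big' by (simp add: pos_le_divide_eq mult.commute)
  qed
  thus ?thesis unfolding M_def \<theta>_def q_def a_def .
qed

lemma greedy_step:
  fixes Q :: "'a set" and C :: "(nat \<Rightarrow> 'a) set"
  assumes Qf: "finite Q" and q1: "card Q \<ge> 1" and c0: "c \<ge> 0"
    and Ccode: "C \<subseteq> PiE {1..n} (\<lambda>_. Q)"
    and fib: "\<And>D F. D \<subseteq> {1..n} \<Longrightarrow> card D \<le> N \<Longrightarrow> F \<subseteq> PiE D (\<lambda>_. Q) \<Longrightarrow> min_dist_ge D F \<rho>
              \<Longrightarrow> real (card F) \<le> real (card Q) powr (c * real (card D))"
    and U: "U \<subseteq> {1..n}" and R: "R \<subseteq> {1..n}" "card R \<le> N" "min_dist_ge R (proj C R) \<rho>"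
    and pU: "real (card (proj C U)) \<le> real (card Q) powr (c * real (card U))"
  shows "real (card (proj C (U \<union> R))) \<le> real (card Q) powr (c * real (card (U \<union> R)))"
proof -
  define q where "q = real (card Q)"
  define D where "D = R - U"
  define U' where "U' = U \<union> R"
  have U'D: "U' = U \<union> D" unfolding U'_def D_def by auto
  have finU: "finite U" using U finite_subset by blast
  have finD: "finite D" using R unfolding D_def using finite_subset by blast
  have finPi: "finite (PiE {1..n} (\<lambda>_. Q))" using Qf by (simp add: finite_PiE)
  have finC: "finite C" using Ccode finPi finite_subset by blast
  have cardU': "card U' = card U + card D" unfolding U'D using finU finD
    by (subst card_Un_disjoint) (auto simp: D_def)
  have Dsub: "D \<subseteq> {1..n}" "card D \<le> N"
  proof -
    show "D \<subseteq> {1..n}" using R unfolding D_def by auto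
    have "card D \<le> card R" unfolding D_def using R finite_subset by (intro card_mono) auto
    thus "card D \<le> N" using R by linarith
  qed
  define X where "X u = {x\<in>C. restrict x U = u}" for u
  define F where "F u = (\<lambda>x. restrict x D) ` X u" for u
  have Fbound: "real (card (F u)) \<le> q powr (c * real (card D))" for u
  proof -
    have "F u \<subseteq> PiE D (\<lambda>_. Q)"
      unfolding F_def X_def using Ccode Dsub by (auto simp: PiE_iff dest!: subsetD[OF Ccode])
    moreover have "min_dist_ge D (F u) \<rho>"
      unfolding min_dist_ge_def
    proof (intro ballI impI)
      fix f g assume f: "f \<in> F u" and g: "g \<in> F u" and fg: "f \<noteq> g"
      obtain x where x: "x \<in> X u" "f = restrict x D" using f unfolding F_def by auto
      obtain y where y: "y \<in> X u" "g = restrict y D" using g unfolding F_def by auto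
      have xy_U: "\<forall>j\<in>U. x j = y j"
      proof
        fix j assume j: "j \<in> U"
        have "restrict x U j = restrict y U j" using x(1) y(1) by (simp add: X_def)
        thus "x j = y j" using j by simp
      qed
      have neq: "restrict x R \<noteq> restrict y R"
      proof
        assume eq: "restrict x R = restrict y R"
        have "restrict x D = restrict y D"
        proof (rule restrict_ext)
          fix j assume "j \<in> D"
          hence "j \<in> R" unfolding D_def by auto
          thus "x j = y j" using fun_cong[OF eq, of j] by simp
        qed
        thus False using fg x(2) y(2) by simp
      qed
      have "restrict x R \<in> proj C R" "restrict y R \<in> proj C R"
        using x(1) y(1) unfolding X_def proj_def by auto
      hence "hdist R (restrict x R) (restrict y R) \<ge> \<rho>" using R(3) neq unfolding min_dist_ge_def by blast
      moreover have "{j\<in>R. restrict x R j \<noteq> restrict y R j} = {j\<in>D. f j \<noteq> g j}"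
        unfolding x(2) y(2) D_def using xy_U by auto
      ultimately show "\<rho> \<le> hdist D f g" unfolding hdist_def by simp
    qed
    ultimately show ?thesis unfolding q_def using fib[OF Dsub] by blast
  qed
  have img: "(\<lambda>x. restrict x U') ` X u \<subseteq> (\<lambda>g. \<lambda>j. if j \<in> U then u j else if j \<in> D then g j else undefined) ` F u" for u
  proof
    fix w assume "w \<in> (\<lambda>x. restrict x U') ` X u"
    then obtain x where x: "x \<in> X u" "w = restrict x U'" by auto
    have "w = (\<lambda>j. if j \<in> U then u j else if j \<in> D then restrict x D j else undefined)"
    proof -
      have u: "u = restrict x U" using x(1) by (simp add: X_def)
      show ?thesis unfolding x(2) u U'D by (simp add: fun_eq_iff)
    qed
    thus "w \<in> (\<lambda>g. \<lambda>j. if j \<in> U then u j else if j \<in> D then g j else undefined) ` F u"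
      using x(1) unfolding F_def by blast
  qed
  have cardimg: "card ((\<lambda>x. restrict x U') ` X u) \<le> card (F u)" for u
  proof -
    have finF: "finite (F u)" unfolding F_def X_def using finC by auto
    have "card ((\<lambda>x. restrict x U') ` X u) \<le> card ((\<lambda>g. \<lambda>j. if j \<in> U then u j else if j \<in> D then g j else undefined) ` F u)"
      using img finF by (intro card_mono) auto
    also have "\<dots> \<le> card (F u)" by (rule card_image_le[OF finF])
    finally show ?thesis .
  qed
  have projeq: "proj C U' = (\<Union>u\<in>proj C U. (\<lambda>x. restrict x U') ` X u)"
    unfolding proj_def X_def by blast
  have finPU: "finite (proj C U)" unfolding proj_def using finC by auto
  have "real (card (proj C U')) \<le> real (\<Sum>u\<in>proj C U. card ((\<lambda>x. restrict x U') ` X u))"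
    unfolding projeq by (intro of_nat_mono card_UN_le finPU)
  also have "\<dots> \<le> (\<Sum>u\<in>proj C U. real (card (F u)))"
    unfolding of_nat_sum using cardimg by (intro sum_mono) auto
  also have "\<dots> \<le> (\<Sum>u\<in>proj C U. q powr (c * real (card D)))"
    using Fbound by (intro sum_mono) auto
  also have "\<dots> = real (card (proj C U)) * q powr (c * real (card D))" by simp
  also have "\<dots> \<le> q powr (c * real (card U)) * q powr (c * real (card D))"
    using pU unfolding q_def by (intro mult_right_mono) auto
  also have "\<dots> = q powr (c * real (card U'))"
    unfolding cardU' by (simp add: powr_add[symmetric] algebra_simps)
  finally show ?thesis unfolding q_def U'_def .
qed

lemma greedy_bound:
  fixes Q :: "'a set" and C :: "(nat \<Rightarrow> 'a) set"
  assumes Qf: "finite Q" and q2: "card Q \<ge> 2" and c0: "c \<ge> 0" and N1: "N \<ge> 1"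
    and LRC: "is_LRC Q n k r \<rho> C" and md: "has_min_dist {1..n} C d" and Ndef: "N = r + \<rho> - 1"
    and fib: "\<And>D F. D \<subseteq> {1..n} \<Longrightarrow> card D \<le> N \<Longrightarrow> F \<subseteq> PiE D (\<lambda>_. Q) \<Longrightarrow> min_dist_ge D F \<rho>
              \<Longrightarrow> real (card F) \<le> real (card Q) powr (c * real (card D))"
  shows "k \<le> c * (real n - real d + real N)"
proof -
  define q where "q = real (card Q)"
  have q1: "q > 1" using q2 unfolding q_def by simp
  have Ccode: "C \<subseteq> PiE {1..n} (\<lambda>_. Q)" and cardC: "real (card C) = q powr k"
    and loc: "\<forall>i\<in>{1..n}. \<exists>R. i \<in> R \<and> R \<subseteq> {1..n} \<and> card R \<le> N \<and> min_dist_ge R (proj C R) \<rho>"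
  proof -
    show "C \<subseteq> PiE {1..n} (\<lambda>_. Q)" using LRC unfolding is_LRC_def is_code_def by blast
    show "real (card C) = q powr k" using LRC unfolding is_LRC_def q_def by blast
    show "\<forall>i\<in>{1..n}. \<exists>R. i \<in> R \<and> R \<subseteq> {1..n} \<and> card R \<le> N \<and> min_dist_ge R (proj C R) \<rho>"
      using LRC unfolding is_LRC_def Ndef by blast
  qed
  have finPi: "finite (PiE {1..n} (\<lambda>_. Q))" using Qf by (simp add: finite_PiE)
  have finC: "finite C" using Ccode finPi finite_subset by blast
  have claim: "m \<le> n \<longrightarrow> (\<exists>U\<subseteq>{1..n}. m \<le> card U \<and> card U \<le> m + N - 1 \<and>
                  real (card (proj C U)) \<le> q powr (c * real (card U)))" for m
  proof (induction m)
    case 0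
    have "proj C {} \<subseteq> {\<lambda>_. undefined}" unfolding proj_def by auto
    hence "card (proj C {}) \<le> card {\<lambda>_::nat. undefined::'a}" by (intro card_mono) auto
    hence "card (proj C {}) \<le> 1" by simp
    thus ?case using q1 by (intro impI exI[of _ "{}"]) auto
  next
    case (Suc m)
    show ?case
    proof
      assume Sm: "Suc m \<le> n"
      then obtain U where U: "U \<subseteq> {1..n}" "m \<le> card U" "card U \<le> m + N - 1"
        "real (card (proj C U)) \<le> q powr (c * real (card U))" using Suc by auto
      show "\<exists>U\<subseteq>{1..n}. Suc m \<le> card U \<and> card U \<le> Suc m + N - 1 \<and>
                  real (card (proj C U)) \<le> q powr (c * real (card U))"
      proof (cases "Suc m \<le> card U")
        case True thus ?thesis using U N1 by (intro exI[of _ U]) auto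
      next
        case False
        hence cU: "card U = m" using U by simp
        have "U \<noteq> {1..n}"
        proof
          assume "U = {1..n}" hence "card U = n" by simp
          thus False using cU Sm by simp
        qed
        then obtain i where i: "i \<in> {1..n}" "i \<notin> U" using U by blast
        obtain R where R: "i \<in> R" "R \<subseteq> {1..n}" "card R \<le> N" "min_dist_ge R (proj C R) \<rho>"
          using loc i by blast
        have finU: "finite U" using U finite_subset by blast
        have finR: "finite R" using R finite_subset by blast
        have b: "real (card (proj C (U \<union> R))) \<le> q powr (c * real (card (U \<union> R)))"
          unfolding q_def using greedy_step[OF Qf _ c0 Ccode fib U(1) R(2-4)] U(4) q2 unfolding q_def by simp
        have "card (insert i U) \<le> card (U \<union> R)" using i R finU finR by (intro card_mono) auto
        hence l: "Suc m \<le> card (U \<union> R)" using i finU cU by simp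
        have "card (U \<union> R) \<le> card U + card R" by (rule card_Un_le)
        hence u: "card (U \<union> R) \<le> Suc m + N - 1" using cU R N1 by linarith
        show ?thesis using l u b U R by (intro exI[of _ "U \<union> R"]) auto
      qed
    qed
  qed
  obtain x y where xy: "x \<in> C" "y \<in> C" "x \<noteq> y" "hdist {1..n} x y = d"
    and mdg: "min_dist_ge {1..n} C d" using md unfolding has_min_dist_def by auto
  have d1: "d \<ge> 1"
  proof -
    have "\<exists>j\<in>{1..n}. x j \<noteq> y j"
    proof (rule ccontr)
      assume "\<not> ?thesis"
      hence "\<forall>j\<in>{1..n}. x j = y j" by blast
      hence "x = y" using PiE_ext[of x "{1..n}" "\<lambda>_. Q" y] xy(1,2) Ccode by blast
      thus False using xy by simp
    qed
    hence "{j\<in>{1..n}. x j \<noteq> y j} \<noteq> {}" by auto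
    moreover have "finite {j\<in>{1..n}. x j \<noteq> y j}" by simp
    ultimately have "card {j\<in>{1..n}. x j \<noteq> y j} \<noteq> 0" by (simp only: card_eq_0_iff) simp
    hence "hdist {1..n} x y \<noteq> 0" unfolding hdist_def .
    thus ?thesis using xy(4) by linarith
  qed
  have dn: "d \<le> n"
  proof -
    have "card {j\<in>{1..n}. x j \<noteq> y j} \<le> card {1..n}" by (intro card_mono) auto
    thus ?thesis using xy unfolding hdist_def by simp
  qed
  obtain U where U: "U \<subseteq> {1..n}" "n - d + 1 \<le> card U" "card U \<le> n - d + 1 + N - 1"
    "real (card (proj C U)) \<le> q powr (c * real (card U))"
  proof -
    have "n - d + 1 \<le> n" using d1 dn by simp
    thus ?thesis using claim[of "n - d + 1"] that by blast
  qed
  have finU: "finite U" using U finite_subset by blast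
  have inj: "inj_on (\<lambda>x. restrict x U) C"
  proof (rule inj_onI, rule ccontr)
    fix x y assume x: "x \<in> C" and y: "y \<in> C" and eq: "restrict x U = restrict y U" and ne: "x \<noteq> y"
    have "{j\<in>{1..n}. x j \<noteq> y j} \<subseteq> {1..n} - U"
    proof
      fix j assume j: "j \<in> {j\<in>{1..n}. x j \<noteq> y j}"
      have "j \<notin> U"
      proof
        assume "j \<in> U"
        hence "x j = y j" using fun_cong[OF eq, of j] by simp
        thus False using j by simp
      qed
      thus "j \<in> {1..n} - U" using j by simp
    qed
    hence "card {j\<in>{1..n}. x j \<noteq> y j} \<le> card ({1..n} - U)" by (intro card_mono) auto
    also have "\<dots> = n - card U" using U finU by (simp add: card_Diff_subset)
    finally have "hdist {1..n} x y \<le> d - 1" unfolding hdist_def using U(2) by linarith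
    moreover have "hdist {1..n} x y \<ge> d" using mdg x y ne unfolding min_dist_ge_def by blast
    ultimately show False using d1 by linarith
  qed
  have "card (proj C U) = card C" unfolding proj_def using inj by (simp add: card_image)
  hence "q powr k \<le> q powr (c * real (card U))" using U(4) cardC by simp
  hence kU: "k \<le> c * real (card U)" using q1 by simp
  have "real (card U) \<le> real n - real d + real N"
  proof -
    have "card U \<le> n - d + N" using U(3) N1 by linarith
    hence "real (card U) \<le> real (n - d + N)" by (simp only: of_nat_le_iff)
    thus ?thesis using dn by (simp add: of_nat_diff)
  qed
  hence "c * real (card U) \<le> c * (real n - real d + real N)" using c0 by (intro mult_left_mono)
  thus ?thesis using kU by linarith
qed

lemma mu_step:
  fixes f k :: real and n d N :: nat
  assumes f0: "f \<ge> 0" and N0: "N > 0" and kb: "k \<le> f / real N * (real n - real d + real N)"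
  shows "k \<le> real_of_int (\<lceil>(real n - (real d - 1)) / real N\<rceil> + 1) * f"
proof -
  define x where "x = (real n - (real d - 1)) / real N"
  have "(real n - real d + real N) / real N = x + (real N - 1) / real N"
    unfolding x_def using N0 by (simp add: field_simps)
  also have "\<dots> \<le> real_of_int (\<lceil>x\<rceil> + 1)"
  proof -
    have "(real N - 1) / real N \<le> 1" using N0 by (simp add: divide_le_eq_1)
    moreover have "x \<le> real_of_int \<lceil>x\<rceil>" by (rule le_of_int_ceiling)
    ultimately show ?thesis by linarith
  qed
  finally have "(real n - real d + real N) / real N \<le> real_of_int (\<lceil>x\<rceil> + 1)" .
  hence "f * ((real n - real d + real N) / real N) \<le> f * real_of_int (\<lceil>x\<rceil> + 1)"
    using f0 by (intro mult_left_mono)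
  thus ?thesis using kb unfolding x_def by (simp add: mult.commute)
qed

lemma vol_lc_any:
  "p \<ge> 0 \<Longrightarrow> vol p (Suc t) a * vol p (Suc t) (Suc (Suc a)) \<le> (vol p (Suc t) (Suc a))^2"
proof (cases t)
  case 0 then show ?thesis by (simp add: vol_def)
next
  case (Suc s) assume "p \<ge> 0" then show ?thesis using vol_lc_a[of p s a] Suc by simp
qed

lemma vol_rate:
  assumes p: "p \<ge> 0" and aN: "a \<le> N"
  shows "vol p (Suc t) N ^ a \<le> vol p (Suc t) a ^ N"
proof (rule logconc_rate[of "\<lambda>a. vol p (Suc t) a"])
  show "vol p (Suc t) 0 = 1" unfolding vol_def by (subst sum.lessThan_Suc_shift) simp
  show "0 < vol p (Suc t) a" for a using vol_ge1[OF p, of t a] by simp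
  show "vol p (Suc t) a * vol p (Suc t) (Suc (Suc a)) \<le> (vol p (Suc t) (Suc a))\<^sup>2" for a
    using vol_lc_any[OF p] .
qed (rule aN)

lemma ln_concave2:
  fixes u v l :: real
  assumes u: "u > 0" and v: "v > 0" and l: "0 \<le> l" "l \<le> 1"
  shows "(1 - l) * ln u + l * ln v \<le> ln ((1 - l) * u + l * v)"
proof -
  define w where "w = (1 - l) * u + l * v"
  have w: "w > 0" unfolding w_def using u v l
    by (cases "l = 0") (auto intro: add_nonneg_pos add_pos_nonneg)
  have "(1 - l) * ln (u / w) \<le> (1 - l) * (u / w - 1)"
    using l u w by (intro mult_left_mono ln_le_minus_one) auto
  moreover have "l * ln (v / w) \<le> l * (v / w - 1)"
    using l v w by (intro mult_left_mono ln_le_minus_one) auto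
  moreover have "(1 - l) * (u / w - 1) + l * (v / w - 1) = 0"
    using w unfolding w_def by (simp add: field_simps)
  ultimately have "(1 - l) * ln (u / w) + l * ln (v / w) \<le> 0" by linarith
  thus ?thesis using u v w unfolding w_def[symmetric] by (simp add: ln_div algebra_simps)
qed

lemma hamming_part:
  fixes Q :: "'a set" and C :: "(nat \<Rightarrow> 'a) set" and q n r \<rho> d :: nat and k :: real
  assumes Qf: "finite Q" and cQ: "card Q = q" and q2: "q \<ge> 2" and r1: "r \<ge> 1" and r2: "\<rho> \<ge> 2"
    and LRC: "is_LRC Q n k r \<rho> C" and md: "has_min_dist {1..n} C d"
  shows "k \<le> real_of_int (\<lceil>(real n - (real d - 1)) / real (r + \<rho> - 1)\<rceil> + 1) *
     (real (r + \<rho> - 1) - log q (\<Sum>e = 0..(\<rho> - 1) div 2. real ((r + \<rho> - 1) choose e) * (real q - 1) ^ e))"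
proof -
  define N where "N = r + \<rho> - 1"
  define t where "t = (\<rho> - 1) div 2"
  define p where "p = real q - 1"
  define V where "V a = vol p (Suc t) a" for a
  have p0: "p \<ge> 0" using q2 unfolding p_def by simp
  have N1: "N \<ge> 1" "real N > 0" using r1 r2 unfolding N_def by auto
  have q1: "real q > 1" using q2 by simp
  have Vpos: "V a \<ge> 1" for a unfolding V_def using vol_ge1[OF p0] .
  have Vsum: "(\<Sum>e = 0..t. real (N choose e) * (real q - 1) ^ e) = V N"
    unfolding V_def vol_def p_def lessThan_Suc_atMost atLeast0AtMost ..
  have t2: "2 * t + 1 \<le> \<rho>" unfolding t_def using r2 by linarith
  have Q1: "card Q \<ge> 1" using cQ q2 by simp
  have packF: "real (card F) * V (card D) \<le> real q ^ card D"
    if "finite D" "F \<subseteq> PiE D (\<lambda>_. Q)" "min_dist_ge D F \<rho>" for D :: "nat set" and F :: "(nat \<Rightarrow> 'a) set"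
    using packing[OF that(1) Qf Q1 that(2,3) t2] cQ unfolding V_def p_def by simp
  have VN: "V N \<le> real q ^ N"
  proof -
    obtain z where z: "z \<in> Q" using Q1 by (metis card.empty all_not_in_conv not_one_le_zero)
    define x where "x = restrict (\<lambda>_. z) {1..N}"
    have "x \<in> PiE {1..N} (\<lambda>_. Q)" unfolding x_def using z by auto
    hence "real (card {x}) * V (card {1..N}) \<le> real q ^ card {1..N}"
      by (intro packF) (auto simp: min_dist_ge_def)
    thus ?thesis by simp
  qed
  define Hm where "Hm = real N - log q (V N)"
  have Hm0: "Hm \<ge> 0"
  proof -
    have VNp: "0 < V N" using Vpos[of N] by simp
    have qNp: "0 < real q ^ N" using q1 by simp
    have "log q (V N) \<le> log q (real q ^ N)"
      using log_le_cancel_iff[OF q1 VNp qNp] VN by blast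
    also have "\<dots> = real N" using q1 by (simp add: log_nat_power)
    finally show ?thesis unfolding Hm_def by simp
  qed
  define c where "c = Hm / real N"
  have c0: "c \<ge> 0" unfolding c_def using Hm0 N1 by simp
  have fib: "real (card F) \<le> real (card Q) powr (c * real (card D))"
    if D: "D \<subseteq> {1..n}" "card D \<le> N" and F: "F \<subseteq> PiE D (\<lambda>_. Q)" and mdF: "min_dist_ge D F \<rho>"
    for D :: "nat set" and F :: "(nat \<Rightarrow> 'a) set"
  proof -
    define a where "a = card D"
    have finD: "finite D" using D finite_subset by blast
    have VaP: "V a > 0" using Vpos[of a] by simp
    have "real (card F) \<le> real q ^ a / V a"
      using packF[OF finD F mdF] VaP unfolding a_def by (simp add: pos_le_divide_eq)
    also have "\<dots> = real q powr (real a - log q (V a))"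
      using q1 VaP by (simp add: powr_diff powr_realpow)
    also have "\<dots> \<le> real q powr (c * real a)"
    proof (rule powr_mono)
      show "1 \<le> real q" using q1 by simp
      have "V N ^ a \<le> V a ^ N" unfolding V_def using vol_rate[OF p0, of a N t] D unfolding a_def by simp
      hence "log q (V N ^ a) \<le> log q (V a ^ N)"
      proof -
        have "0 < V N ^ a" "0 < V a ^ N" using Vpos[of N] Vpos[of a] by simp_all
        thus ?thesis using log_le_cancel_iff[OF q1] \<open>V N ^ a \<le> V a ^ N\<close> by blast
      qed
      hence "real a * log q (V N) \<le> real N * log q (V a)"
        using log_nat_power[of "V N" "real q" a] log_nat_power[of "V a" "real q" N] Vpos[of N] Vpos[of a] by simp
      hence "real a * log q (V N) / real N \<le> log q (V a)"
        using N1 by (simp add: divide_le_eq mult.commute)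
      moreover have "c * real a = real a - real a * log q (V N) / real N"
        unfolding c_def Hm_def using N1 by (simp add: field_simps)
      ultimately show "real a - log q (V a) \<le> c * real a" by linarith
    qed
    finally show ?thesis unfolding a_def cQ .
  qed
  have "k \<le> c * (real n - real d + real N)"
    using greedy_bound[OF Qf _ c0 N1(1) LRC md N_def fib] q2 cQ by simp
  hence kH: "k \<le> Hm / real N * (real n - real d + real N)" unfolding c_def .
  have N0: "N > 0" using N1 by simp
  from mu_step[OF Hm0 N0 kH] show ?thesis unfolding Hm_def N_def[symmetric] t_def[symmetric] Vsum .
qed

lemma plotkin_part:
  fixes Q :: "'a set" and C :: "(nat \<Rightarrow> 'a) set" and q n r \<rho> d :: nat and k :: real
  assumes Qf: "finite Q" and cQ: "card Q = q" and q2: "q \<ge> 2" and r1: "r \<ge> 1" and r2: "\<rho> \<ge> 2"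
    and LRC: "is_LRC Q n k r \<rho> C" and md: "has_min_dist {1..n} C d"
    and big: "real \<rho> > (real q - 1) / real q * real (r + \<rho> - 1)"
  shows "k \<le> real_of_int (\<lceil>(real n - (real d - 1)) / real (r + \<rho> - 1)\<rceil> + 1) *
     log q (real \<rho> / (real \<rho> - (real q - 1) / real q * real (r + \<rho> - 1)))"
proof -
  define N where "N = r + \<rho> - 1"
  define \<theta> where "\<theta> = (real q - 1) / real q"
  have N1: "N \<ge> 1" "real N > 0" "N > 0" using r1 r2 unfolding N_def by auto
  have q1: "real q > 1" using q2 by simp
  have th0: "\<theta> \<ge> 0" unfolding \<theta>_def using q2 by simp
  have bigN: "\<theta> * real N < real \<rho>" unfolding \<theta>_def N_def by (rule big)
  define v where "v = real \<rho> - \<theta> * real N"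
  have v0: "v > 0" unfolding v_def using bigN by simp
  have rho0: "real \<rho> > 0" using r2 by simp
  define PN where "PN = real \<rho> / v"
  have PN1: "PN \<ge> 1" unfolding PN_def using v0 th0 N1 by (simp add: v_def)
  define c where "c = log q PN / real N"
  have c0: "c \<ge> 0" unfolding c_def using PN1 q1 N1 by simp
  have Q1: "card Q \<ge> 1" using cQ q2 by simp
  have fib: "real (card F) \<le> real (card Q) powr (c * real (card D))"
    if D: "D \<subseteq> {1..n}" "card D \<le> N" and F: "F \<subseteq> PiE D (\<lambda>_. Q)" and mdF: "min_dist_ge D F \<rho>"
    for D :: "nat set" and F :: "(nat \<Rightarrow> 'a) set"
  proof -
    define a where "a = card D"
    have finD: "finite D" using D finite_subset by blast
    have aN: "real a \<le> real N" using D unfolding a_def by simp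
    have "\<theta> * real a \<le> \<theta> * real N" using aN th0 by (intro mult_left_mono)
    hence biga: "\<theta> * real a < real \<rho>" using bigN by linarith
    have w0: "real \<rho> - \<theta> * real a > 0" using biga by simp
    have "real (card F) \<le> real \<rho> / (real \<rho> - \<theta> * real a)"
      using plotkin_fiber[OF finD Qf Q1 F mdF] biga cQ unfolding \<theta>_def a_def by simp
    also have "\<dots> \<le> real q powr (c * real a)"
    proof -
      define l where "l = real a / real N"
      have l: "0 \<le> l" "l \<le> 1" unfolding l_def using aN N1 by auto
      have "(1 - l) * ln (real \<rho>) + l * ln v \<le> ln ((1 - l) * real \<rho> + l * v)"
        by (rule ln_concave2[OF rho0 v0 l])
      also have "(1 - l) * real \<rho> + l * v = real \<rho> - \<theta> * real a"
        unfolding l_def v_def using N1 by (simp add: field_simps)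
      finally have cc: "(1 - l) * ln (real \<rho>) + l * ln v \<le> ln (real \<rho> - \<theta> * real a)" .
      have "ln (real \<rho> / (real \<rho> - \<theta> * real a)) = ln (real \<rho>) - ln (real \<rho> - \<theta> * real a)"
        using rho0 w0 by (simp add: ln_div)
      also have "\<dots> \<le> l * (ln (real \<rho>) - ln v)" using cc by (simp add: algebra_simps)
      also have "ln (real \<rho>) - ln v = ln PN" unfolding PN_def using rho0 v0 by (simp add: ln_div)
      also have "l * ln PN = (c * real a) * ln (real q)"
        unfolding l_def c_def log_def using N1 q1 by (simp add: field_simps)
      finally have le: "ln (real \<rho> / (real \<rho> - \<theta> * real a)) \<le> (c * real a) * ln (real q)" .
      have "real \<rho> / (real \<rho> - \<theta> * real a) = exp (ln (real \<rho> / (real \<rho> - \<theta> * real a)))"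
        using rho0 w0 by simp
      also have "\<dots> \<le> exp ((c * real a) * ln (real q))" using le by simp
      also have "\<dots> = real q powr (c * real a)" using q1 by (simp add: powr_def)
      finally show ?thesis .
    qed
    finally show ?thesis unfolding a_def cQ .
  qed
  have "k \<le> c * (real n - real d + real N)"
    using greedy_bound[OF Qf _ c0 N1(1) LRC md N_def fib] q2 cQ by simp
  hence kc: "k \<le> log q PN / real N * (real n - real d + real N)" unfolding c_def .
  have "log q PN \<ge> 0" using PN1 q1 by simp
  from mu_step[OF this N1(3) kc] show ?thesis unfolding PN_def v_def \<theta>_def N_def .
qed

lemma singleton_part:
  fixes Q :: "'a set" and C :: "(nat \<Rightarrow> 'a) set" and q n r \<rho> d :: nat and k :: real
  assumes Qf: "finite Q" and cQ: "card Q = q" and q2: "q \<ge> 2" and r1: "r \<ge> 1" and r2: "\<rho> \<ge> 2"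
    and LRC: "is_LRC Q n k r \<rho> C" and md: "has_min_dist {1..n} C d"
  shows "k \<le> real_of_int (\<lceil>(real n - (real d - 1)) / real (r + \<rho> - 1)\<rceil> + 1) * real r"
proof -
  define N where "N = r + \<rho> - 1"
  have N1: "N \<ge> 1" "real N > 0" "N > 0" using r1 r2 unfolding N_def by auto
  have q1: "real q > 1" using q2 by simp
  define c where "c = real r / real N"
  have c0: "c \<ge> 0" unfolding c_def by simp
  have fib: "real (card F) \<le> real (card Q) powr (c * real (card D))"
    if D: "D \<subseteq> {1..n}" "card D \<le> N" and F: "F \<subseteq> PiE D (\<lambda>_. Q)" and mdF: "min_dist_ge D F \<rho>"
    for D :: "nat set" and F :: "(nat \<Rightarrow> 'a) set"
  proof -
    define a where "a = card D"
    have finD: "finite D" using D finite_subset by blast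
    have "card F \<le> q ^ (a - (\<rho> - 1))"
      using singleton_fiber[OF finD Qf F mdF] r2 cQ unfolding a_def by simp
    hence "real (card F) \<le> real q ^ (a - (\<rho> - 1))" by (metis of_nat_le_iff of_nat_power)
    also have "\<dots> = real q powr real (a - (\<rho> - 1))" using q1 by (simp add: powr_realpow)
    also have "\<dots> \<le> real q powr (c * real a)"
    proof (rule powr_mono)
      show "1 \<le> real q" using q1 by simp
      show "real (a - (\<rho> - 1)) \<le> c * real a"
      proof (cases "a \<le> \<rho> - 1")
        case True thus ?thesis using c0 by simp
      next
        case False
        have aN: "a \<le> N" using D unfolding a_def by simp
        have e: "real (a - (\<rho> - 1)) = real a - real \<rho> + 1" using False r2 by (simp add: of_nat_diff)
        have NN: "real N = real r + real \<rho> - 1" unfolding N_def using r2 by (simp add: of_nat_diff)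
        have "real r * real a - (real a - real \<rho> + 1) * real N = (real \<rho> - 1) * (real N - real a)"
          unfolding NN by (simp add: algebra_simps)
        also have "\<dots> \<ge> 0" using aN r2 by (intro mult_nonneg_nonneg) auto
        finally have "(real a - real \<rho> + 1) * real N \<le> real r * real a" by simp
        hence "real a - real \<rho> + 1 \<le> real r * real a / real N" using N1 by (simp add: le_divide_eq)
        thus ?thesis unfolding e c_def by simp
      qed
    qed
    finally show ?thesis unfolding a_def cQ .
  qed
  have "k \<le> c * (real n - real d + real N)"
    using greedy_bound[OF Qf _ c0 N1(1) LRC md N_def fib] q2 cQ by simp
  hence kc: "k \<le> real r / real N * (real n - real d + real N)" unfolding c_def .
  from mu_step[OF _ N1(3) kc] show ?thesis unfolding N_def by simp
qed

theorem corollary1: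
  fixes Q :: "'a set" and q n r \<rho> d :: nat and k :: real and C :: "(nat \<Rightarrow> 'a) set"
  assumes "finite Q" and "card Q = q" and "q \<ge> 2" and "r \<ge> 1" and "\<rho> \<ge> 2"
    and "is_LRC Q n k r \<rho> C"
    and "has_min_dist {1..n} C d"
  defines "N \<equiv> r + \<rho> - 1"
  defines "\<mu> \<equiv> \<lceil>(real n - (real d - 1)) / real N\<rceil> + 1"
  shows "(k \<le> real_of_int \<mu> * (real N - log q (\<Sum>e = 0..(\<rho> - 1) div 2. real (N choose e) * (real q - 1) ^ e))) \<and>
         (\<rho> > (real q - 1) / real q * real N \<longrightarrow>
           k \<le> real_of_int \<mu> * log q (real \<rho> / (real \<rho> - (real q - 1) / real q * real N))) \<and>
         k \<le> real_of_int \<mu> * real r"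
proof -
  have h: "k \<le> real_of_int \<mu> * (real N - log q (\<Sum>e = 0..(\<rho> - 1) div 2. real (N choose e) * (real q - 1) ^ e))"
    unfolding N_def \<mu>_def by (rule hamming_part[OF assms(1-7)])
  have p: "\<rho> > (real q - 1) / real q * real N \<longrightarrow>
           k \<le> real_of_int \<mu> * log q (real \<rho> / (real \<rho> - (real q - 1) / real q * real N))"
    unfolding N_def \<mu>_def using plotkin_part[OF assms(1-7)] by blast
  have s: "k \<le> real_of_int \<mu> * real r"
    unfolding N_def \<mu>_def by (rule singleton_part[OF assms(1-7)])
  show ?thesis using h p s by blast
qed

end
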